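(* Let $G$ be the graph on the $16$ vertices $u_i,b_i,o_i,r_i$ ($0\le i\le 3$) whose edge set is the union of the edge sets of the following eight complete graphs $K_4$: the complete graph on $\{u_0,u_1,u_2,u_3\}$; for each $i\in\{0,1,2,3\}$, the complete graph on $\{u_i,b_i,o_i,r_i\}$; the complete graph on $\{b_0,b_1,b_2,b_3\}$; the complete graph on $\{o_0,o_1,o_2,o_3\}$; and the complete graph on $\{r_0,r_1,r_2,r_3\}$. Then $G$ contains no copy of $\widehat P_4$ and $G$ has exactly $32=\lfloor 16^2/8\rfloor$ triangles; in particular $G$ is an extremal graph for $\mathrm{ex}(16,K_3,\widehat P_4)$ that contains a $K_4$.
   Context: All graphs are finite and simple. $P_4$ denotes the path on $4$ vertices. For a graph $G$, its suspension $\widehat G$ is the graph obtained from $G$ by adding one new vertex and joining it to every vertex of $G$. "Contains a copy of $H$" means contains a subgraph (not necessarily induced) isomorphic to $H$. $\mathrm{ex}(n,K_3,H)$ denotes the maximum number of triangles in an $n$-vertex graph containing no copy of $H$. *)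

theory Defs
  imports Main
begin

type_synonym 'a graph = "'a set \<times> 'a set set"

definition complete_on :: "'a set \<Rightarrow> 'a set set" where
  "complete_on S = {{x, y} | x y. x \<in> S \<and> y \<in> S \<and> x \<noteq> y}"

definition K :: "nat \<Rightarrow> nat graph" where
  "K n = ({0..<n}, complete_on {0..<n})"

definition P :: "nat \<Rightarrow> nat graph" where
  "P n = ({0..<n}, {{i, Suc i} | i. Suc i < n})"

definition suspension :: "'a graph \<Rightarrow> 'a option graph" where
  "suspension G = (insert None (Some ` fst G),
      ((`) Some) ` snd G \<union> {{None, Some v} | v. v \<in> fst G})"

definition contains_copy :: "'a graph \<Rightarrow> 'b graph \<Rightarrow> bool" where
  "contains_copy G H \<longleftrightarrow> (\<exists>f. inj_on f (fst H) \<and> f ` fst H \<subseteq> fst G \<and>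
      (\<forall>e \<in> snd H. f ` e \<in> snd G))"

definition triangles :: "'a graph \<Rightarrow> 'a set set" where
  "triangles G = {T. T \<subseteq> fst G \<and> card T = 3 \<and>
      (\<forall>x \<in> T. \<forall>y \<in> T. x \<noteq> y \<longrightarrow> {x, y} \<in> snd G)}"

text \<open>The 16-vertex graph: vertex (c, i) stands for u_i, b_i, o_i, r_i.\<close>
datatype colour = cU | cB | cO | cR

definition G16 :: "(colour \<times> nat) graph" where
  "G16 = (UNIV \<times> {0..<4},
     complete_on {(cU, i) | i. i < 4}
     \<union> (\<Union>i \<in> {0..<4}. complete_on {(cU, i), (cB, i), (cO, i), (cR, i)})
     \<union> complete_on {(cB, i) | i. i < 4}
     \<union> complete_on {(cO, i) | i. i < 4}
     \<union> complete_on {(cR, i) | i. i < 4})"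

end

theory Submission
  imports Defs
begin

lemma UNIV_colour: "(UNIV::colour set) = {cU,cB,cO,cR}"
  using colour.exhaust by auto

lemma finite_colour[simp]: "finite (UNIV::colour set)"
  by (simp add: UNIV_colour)

lemma card_colour: "card (UNIV::colour set) = 4"
  by (simp add: UNIV_colour)

lemma V16: "fst G16 = UNIV \<times> {0..<4}" by (simp add: G16_def)

lemma edge_iff: "{x,y} \<in> snd G16 \<longleftrightarrow>
   x \<noteq> y \<and> snd x < 4 \<and> snd y < 4 \<and> (fst x = fst y \<or> snd x = snd y)"
proof
  assume "{x,y} \<in> snd G16"
  then show "x \<noteq> y \<and> snd x < 4 \<and> snd y < 4 \<and> (fst x = fst y \<or> snd x = snd y)"
    unfolding G16_def complete_on_def by (auto simp: doubleton_eq_iff)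
next
  assume h: "x \<noteq> y \<and> snd x < 4 \<and> snd y < 4 \<and> (fst x = fst y \<or> snd x = snd y)"
  obtain c i where x: "x = (c,i)" by (cases x)
  obtain d j where y: "y = (d,j)" by (cases y)
  have cm: "{a,b} \<in> complete_on S" if "a \<in> S" "b \<in> S" "a \<noteq> b" for a b and S :: "(colour\<times>nat) set"
    using that unfolding complete_on_def by blast
  show "{x,y} \<in> snd G16"
  proof (cases "c = d")
    case True
    then have ij: "i \<noteq> j" "i < 4" "j < 4" using h x y by auto
    show ?thesis
    proof (cases d)
      case cU
      have "{x,y} \<in> complete_on {(cU, i) | i. i < 4}" using cm ij True cU x y by auto
      then show ?thesis unfolding G16_def by simp
    next
      case cB
      have "{x,y} \<in> complete_on {(cB, i) | i. i < 4}" using cm ij True cB x y by auto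
      then show ?thesis unfolding G16_def by simp
    next
      case cO
      have "{x,y} \<in> complete_on {(cO, i) | i. i < 4}" using cm ij True cO x y by auto
      then show ?thesis unfolding G16_def by simp
    next
      case cR
      have "{x,y} \<in> complete_on {(cR, i) | i. i < 4}" using cm ij True cR x y by auto
      then show ?thesis unfolding G16_def by simp
    qed
  next
    case False
    then have "i = j" "i < 4" using h x y by auto
    moreover have "{x,y} \<in> complete_on {(cU, i), (cB, i), (cO, i), (cR, i)}"
      using cm[of x "{(cU, i), (cB, i), (cO, i), (cR, i)}" y] False h x y \<open>i = j\<close>
      by (cases c; cases d) auto
    ultimately show ?thesis unfolding G16_def by auto
  qed
qed


lemma rook: "\<lbrakk>{c,x} \<in> snd G16; {c,y} \<in> snd G16; {x,y} \<in> snd G16\<rbrakk>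
   \<Longrightarrow> (fst x = fst c \<longleftrightarrow> fst y = fst c)"
  unfolding edge_iff by (cases x; cases y; cases c) auto

lemma no_susp: "\<not> contains_copy G16 (suspension (P 4))"
proof
  assume "contains_copy G16 (suspension (P 4))"
  then obtain f where inj: "inj_on f (fst (suspension (P 4)))"
    and ed: "\<forall>e \<in> snd (suspension (P 4)). f ` e \<in> snd G16"
    unfolding contains_copy_def by blast
  define c where "c = f None"
  define a where "a = (\<lambda>k. f (Some k))"
  have sp: "k < 4 \<Longrightarrow> {c, a k} \<in> snd G16" for k
  proof -
    assume "k < 4"
    then have "{None, Some k} \<in> snd (suspension (P 4))"
      unfolding suspension_def P_def by auto
    then show ?thesis using ed unfolding c_def a_def by auto
  qed
  have pp: "k < 3 \<Longrightarrow> {a k, a (Suc k)} \<in> snd G16" for k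
  proof -
    assume "k < 3"
    then have "{k, Suc k} \<in> snd (P 4)" unfolding P_def by auto
    then have "Some ` {k, Suc k} \<in> snd (suspension (P 4))"
      unfolding suspension_def snd_conv by blast
    then show ?thesis using ed unfolding c_def a_def by auto
  qed
  have V: "fst (suspension (P 4)) = insert None (Some ` {0..<4})"
    unfolding suspension_def P_def by simp
  have i1: "k < 4 \<Longrightarrow> c \<noteq> a k" for k
    using inj unfolding V c_def a_def inj_on_def by auto
  have i2: "j < 4 \<Longrightarrow> k < 4 \<Longrightarrow> j \<noteq> k \<Longrightarrow> a j \<noteq> a k" for j k
    using inj unfolding V c_def a_def inj_on_def by auto
  have dist: "distinct [c, a 0, a 1, a 2, a 3]"
    using i1[of 0] i1[of 1] i1[of 2] i1[of 3] i2[of 0 1] i2[of 0 2] i2[of 0 3]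
      i2[of 1 2] i2[of 1 3] i2[of 2 3] by auto
  have s0: "{c, a 0} \<in> snd G16" "{c, a 1} \<in> snd G16" "{c, a 2} \<in> snd G16" "{c, a 3} \<in> snd G16"
    using sp by auto
  have p0: "{a 0, a 1} \<in> snd G16" "{a 1, a 2} \<in> snd G16" "{a 2, a 3} \<in> snd G16"
    using pp[of 0] pp[of 1] pp[of 2] by (auto simp: numeral_eq_Suc)
  have eq1: "fst (a 0) = fst c \<longleftrightarrow> fst (a 1) = fst c" using rook s0 p0 by blast
  have eq2: "fst (a 1) = fst c \<longleftrightarrow> fst (a 2) = fst c" using rook s0 p0 by blast
  have eq3: "fst (a 2) = fst c \<longleftrightarrow> fst (a 3) = fst c" using rook s0 p0 by blast
  show False
  proof (cases "fst (a 0) = fst c")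
    case True
    then have fs: "fst (a k) = fst c" if "k \<in> {0,1,2,3}" for k using eq1 eq2 eq3 that by auto
    have d: "distinct [snd c, snd (a 0), snd (a 1), snd (a 2), snd (a 3)]"
      using dist fs by (simp add: prod_eq_iff)
    have "snd c < 4" "snd (a 0) < 4" "snd (a 1) < 4" "snd (a 2) < 4" "snd (a 3) < 4"
      using s0 edge_iff by blast+
    then have sub: "set [snd c, snd (a 0), snd (a 1), snd (a 2), snd (a 3)] \<subseteq> {0..<4}" by auto
    have c5: "card (set [snd c, snd (a 0), snd (a 1), snd (a 2), snd (a 3)]) = 5"
      by (subst distinct_card[OF d]) simp
    have "card (set [snd c, snd (a 0), snd (a 1), snd (a 2), snd (a 3)]) \<le> card {0..<4::nat}"
      by (rule card_mono[OF _ sub]) simp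
    then show False using c5 by simp
  next
    case False
    then have fs: "fst (a k) \<noteq> fst c" if "k \<in> {0,1,2,3}" for k using eq1 eq2 eq3 that by auto
    have sn: "snd (a k) = snd c" if "k \<in> {0,1,2,3}" for k
      using fs[OF that] s0 that edge_iff by auto
    have d: "distinct [fst c, fst (a 0), fst (a 1), fst (a 2), fst (a 3)]"
      using dist fs sn by (simp add: prod_eq_iff)
    have c5: "card (set [fst c, fst (a 0), fst (a 1), fst (a 2), fst (a 3)]) = 5"
      by (subst distinct_card[OF d]) simp
    have "card (set [fst c, fst (a 0), fst (a 1), fst (a 2), fst (a 3)]) \<le> card (UNIV::colour set)"
      by (rule card_mono) simp_all
    then show False using c5 card_colour by simp
  qed
qed

lemma has_K4: "contains_copy G16 (K 4)"
  unfolding contains_copy_def K_def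
proof (intro exI[of _ "\<lambda>i::nat. (cU, i)"] conjI ballI)
  show "inj_on (\<lambda>i. (cU, i)) (fst ({0..<4}, complete_on {0..<4}))" by (simp add: inj_on_def)
  show "(\<lambda>i. (cU, i)) ` fst ({0..<4::nat}, complete_on {0..<4}) \<subseteq> fst G16" by (auto simp: G16_def)
  fix e :: "nat set" assume "e \<in> snd ({0..<4::nat}, complete_on {0..<4})"
  then obtain x y where "e = {x,y}" "x < 4" "y < 4" "x \<noteq> y" by (auto simp: complete_on_def)
  then show "(\<lambda>i. (cU, i)) ` e \<in> snd G16" using edge_iff by simp
qed

definition line :: "colour + nat \<Rightarrow> (colour \<times> nat) set" where
  "line l = (case l of Inl c \<Rightarrow> {c} \<times> {0..<4} | Inr i \<Rightarrow> UNIV \<times> {i})"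

definition Idx :: "(colour + nat) set" where "Idx = Inl ` UNIV \<union> Inr ` {0..<4}"

lemma finite_line: "finite (line l)" by (cases l) (auto simp: line_def)
lemma card_line: "l \<in> Idx \<Longrightarrow> card (line l) = 4"
  by (auto simp: line_def Idx_def card_cartesian_product card_colour)

lemma card_Idx: "card Idx = 8"
proof -
  have "card Idx = card (Inl ` (UNIV::colour set) :: (colour+nat) set) + card (Inr ` {0..<4::nat} :: (colour+nat) set)"
    unfolding Idx_def by (subst card_Un_disjoint) (auto simp del: UNIV_colour)
  also have "\<dots> = 8" by (simp add: card_image card_colour)
  finally show ?thesis .
qed

lemma line_inter: "l \<in> Idx \<Longrightarrow> m \<in> Idx \<Longrightarrow> l \<noteq> m \<Longrightarrow> card (line l \<inter> line m) \<le> 1"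
proof -
  assume "l \<in> Idx" "m \<in> Idx" "l \<noteq> m"
  then have "line l \<inter> line m = {} \<or> (\<exists>p. line l \<inter> line m = {p})"
    by (cases l; cases m) (auto simp: line_def Idx_def)
  then show ?thesis by auto
qed

lemma tri_eq: "triangles G16 = (\<Union>l\<in>Idx. {A. A \<subseteq> line l \<and> card A = 3})"
proof (intro equalityI subsetI)
  fix T assume "T \<in> triangles G16"
  then have T: "T \<subseteq> UNIV \<times> {0..<4}" "card T = 3"
    "\<forall>x\<in>T. \<forall>y\<in>T. x \<noteq> y \<longrightarrow> {x, y} \<in> snd G16"
    unfolding triangles_def V16 by auto
  then obtain x y z where xyz: "T = {x,y,z}" "x \<noteq> y" "x \<noteq> z" "y \<noteq> z"
    using card_3_iff by metis
  have e: "{x,y} \<in> snd G16" "{x,z} \<in> snd G16" "{y,z} \<in> snd G16" using T xyz by auto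
  have "(fst y = fst x \<and> fst z = fst x) \<or> (snd y = snd x \<and> snd z = snd x)"
    using e edge_iff xyz by (cases x; cases y; cases z) auto
  then show "T \<in> (\<Union>l\<in>Idx. {A. A \<subseteq> line l \<and> card A = 3})"
  proof
    assume "fst y = fst x \<and> fst z = fst x"
    then have "T \<subseteq> line (Inl (fst x))" using T xyz by (auto simp: line_def)
    then show ?thesis using T by (auto simp: Idx_def)
  next
    assume "snd y = snd x \<and> snd z = snd x"
    moreover have "snd x < 4" using T xyz by auto
    ultimately have "T \<subseteq> line (Inr (snd x))" "Inr (snd x) \<in> Idx" using T xyz
      by (auto simp: line_def Idx_def)
    then show ?thesis using T by auto
  qed
next
  fix T assume "T \<in> (\<Union>l\<in>Idx. {A. A \<subseteq> line l \<and> card A = 3})"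
  then obtain l where l: "l \<in> Idx" "T \<subseteq> line l" "card T = 3" by auto
  have "T \<subseteq> UNIV \<times> {0..<4}" using l by (auto simp: line_def Idx_def split: sum.splits)
  moreover have "\<forall>x\<in>T. \<forall>y\<in>T. x \<noteq> y \<longrightarrow> {x, y} \<in> snd G16"
  proof (intro ballI impI)
    fix x y assume xy: "x \<in> T" "y \<in> T" "x \<noteq> y"
    show "{x, y} \<in> snd G16"
    proof (cases l)
      case (Inl c)
      then have "x \<in> {c}\<times>{0..<4}" "y \<in> {c}\<times>{0..<4}" using l xy by (auto simp: line_def)
      then show ?thesis using xy by (cases x; cases y) (auto simp: edge_iff)
    next
      case (Inr i)
      then have "x \<in> UNIV\<times>{i}" "y \<in> UNIV\<times>{i}" "i < 4" using l xy by (auto simp: line_def Idx_def)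
      then show ?thesis using xy by (cases x; cases y) (auto simp: edge_iff)
    qed
  qed
  ultimately show "T \<in> triangles G16" using l unfolding triangles_def V16 by auto
qed

lemma card_tri: "card (triangles G16) = 32"
proof -
  have "card (\<Union>l\<in>Idx. {A. A \<subseteq> line l \<and> card A = 3}) = (\<Sum>l\<in>Idx. card {A. A \<subseteq> line l \<and> card A = 3})"
  proof (rule card_UN_disjoint)
    show "finite Idx" unfolding Idx_def by simp
    show "\<forall>l\<in>Idx. finite {A. A \<subseteq> line l \<and> card A = 3}" using finite_line by simp
    show "\<forall>l\<in>Idx. \<forall>m\<in>Idx. l \<noteq> m \<longrightarrow> {A. A \<subseteq> line l \<and> card A = 3} \<inter> {A. A \<subseteq> line m \<and> card A = 3} = {}"
    proof (intro ballI impI)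
      fix l m assume lm: "l \<in> Idx" "m \<in> Idx" "l \<noteq> m"
      show "{A. A \<subseteq> line l \<and> card A = 3} \<inter> {A. A \<subseteq> line m \<and> card A = 3} = {}"
      proof (rule ccontr)
        assume "\<not> ?thesis"
        then obtain A where A: "A \<subseteq> line l \<inter> line m" "card A = 3" by auto
        have "card A \<le> card (line l \<inter> line m)"
          using A finite_line by (intro card_mono) auto
        then show False using line_inter[OF lm] A by simp
      qed
    qed
  qed
  also have "\<dots> = (\<Sum>l\<in>Idx. 4)"
    by (rule sum.cong) (auto simp: n_subsets finite_line card_line numeral_eq_Suc)
  also have "\<dots> = 32" by (simp add: card_Idx)
  finally show ?thesis using tri_eq by simp
qed

theorem mainTheorem3:
  shows "\<not> contains_copy G16 (suspension (P 4))
    \<and> card (triangles G16) = 32 \<and> (32::nat) = 16^2 div 8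
    \<and> contains_copy G16 (K 4)"
  using no_susp card_tri has_K4 by simp

end
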